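(* Let $X$ be a Banach space and $J\subset X$ a closed subspace such that $(X,J)$ has the CQLP, and let $\pi:X\to X/J$ be the quotient map. Let $(x_n)_{n\ge1}\subset X$ be such that $(\pi(x_n))_{n\ge1}$ is a relatively compact sequence in $X/J$. Then there is a relatively compact sequence $(z_n)_{n\ge1}\subset X$ with $\pi(z_n)=\pi(x_n)$ for all $n$ and $\sup_n\|z_n\|=\sup_n\|\pi(x_n)\|$.
   Context: The pair $(X,J)$ has the compact quotient lifting property (CQLP) if for every Banach space $Z$ and every compact linear operator $T:Z\to X/J$ there is a compact linear operator $S:Z\to X$ with $\pi\circ S=T$ and $\|S\|=\|T\|$. *)

theory Defs
  imports "HOL-Analysis.Analysis"
begin

definition qmap :: "'a::real_vector set \<Rightarrow> 'a \<Rightarrow> 'a set" where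
  "qmap J x = {x + j | j. j \<in> J}"

definition quotient_space :: "'a::real_vector set \<Rightarrow> 'a set set" where
  "quotient_space J = range (qmap J)"

definition qnorm :: "'a::real_normed_vector set \<Rightarrow> real" where
  "qnorm C = (INF x\<in>C. norm x)"

definition qdist :: "'a::real_normed_vector set \<Rightarrow> 'a set \<Rightarrow> real" where
  "qdist C D = (INF p\<in>C \<times> D. norm (fst p - snd p))"

definition qrel_compact :: "'a::real_normed_vector set \<Rightarrow> 'a set set \<Rightarrow> bool" where
  "qrel_compact J S \<longleftrightarrow> S \<subseteq> quotient_space J \<and>
     (\<forall>\<sigma>::nat \<Rightarrow> 'a set. (\<forall>n. \<sigma> n \<in> S) \<longrightarrow>
        (\<exists>(r::nat \<Rightarrow> nat) C. strict_mono r \<and> C \<in> quotient_space J \<and> (\<lambda>n. qdist (\<sigma> (r n)) C) \<longlonglongrightarrow> 0))"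

text \<open>A Banach space Z is represented by a carrier Z, a linear subspace of the real vector
  space of all real sequences (pointwise operations), together with an arbitrary complete norm N
  on Z.  (Every Banach space of Hamel dimension at most the continuum, in particular every
  separable Banach space, is isometrically isomorphic to such a structure.)\<close>
type_synonym zvec = "nat \<Rightarrow> real"

definition zadd :: "zvec \<Rightarrow> zvec \<Rightarrow> zvec" where "zadd f g = (\<lambda>n. f n + g n)"
definition zscale :: "real \<Rightarrow> zvec \<Rightarrow> zvec" where "zscale c f = (\<lambda>n. c * f n)"
definition zzero :: zvec where "zzero = (\<lambda>n. 0)"

definition banach_struct :: "zvec set \<Rightarrow> (zvec \<Rightarrow> real) \<Rightarrow> bool" where
  "banach_struct Z N \<longleftrightarrow>
     zzero \<in> Z \<and> (\<forall>f\<in>Z. \<forall>g\<in>Z. zadd f g \<in> Z) \<and> (\<forall>c. \<forall>f\<in>Z. zscale c f \<in> Z) \<and>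
     (\<forall>f\<in>Z. 0 \<le> N f \<and> (N f = 0 \<longleftrightarrow> f = zzero)) \<and>
     (\<forall>f\<in>Z. \<forall>g\<in>Z. N (zadd f g) \<le> N f + N g) \<and>
     (\<forall>c. \<forall>f\<in>Z. N (zscale c f) = \<bar>c\<bar> * N f) \<and>
     (\<forall>s. (\<forall>n. s n \<in> Z) \<longrightarrow>
        (\<forall>e>0. \<exists>M. \<forall>m\<ge>M. \<forall>n\<ge>M. N (zadd (s m) (zscale (-1) (s n))) < e) \<longrightarrow>
        (\<exists>f\<in>Z. (\<lambda>n. N (zadd (s n) (zscale (-1) f))) \<longlonglongrightarrow> 0))"

definition zball :: "zvec set \<Rightarrow> (zvec \<Rightarrow> real) \<Rightarrow> zvec set" where
  "zball Z N = {z \<in> Z. N z \<le> 1}"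

definition lin_op :: "zvec set \<Rightarrow> (zvec \<Rightarrow> 'a::real_vector) \<Rightarrow> bool" where
  "lin_op Z S \<longleftrightarrow> (\<forall>f\<in>Z. \<forall>g\<in>Z. S (zadd f g) = S f + S g) \<and>
                   (\<forall>c. \<forall>f\<in>Z. S (zscale c f) = c *\<^sub>R S f)"

definition op_norm :: "zvec set \<Rightarrow> (zvec \<Rightarrow> real) \<Rightarrow> (zvec \<Rightarrow> 'a::real_normed_vector) \<Rightarrow> real" where
  "op_norm Z N S = (SUP z\<in>zball Z N. norm (S z))"

definition compact_op :: "zvec set \<Rightarrow> (zvec \<Rightarrow> real) \<Rightarrow> (zvec \<Rightarrow> 'a::real_normed_vector) \<Rightarrow> bool" where
  "compact_op Z N S \<longleftrightarrow> lin_op Z S \<and> compact (closure (S ` zball Z N))"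

definition qlin_op :: "'a::real_vector set \<Rightarrow> zvec set \<Rightarrow> (zvec \<Rightarrow> 'a set) \<Rightarrow> bool" where
  "qlin_op J Z T \<longleftrightarrow> (\<forall>f\<in>Z. T f \<in> quotient_space J) \<and>
     (\<forall>f\<in>Z. \<forall>g\<in>Z. \<forall>a\<in>T f. \<forall>b\<in>T g. T (zadd f g) = qmap J (a + b)) \<and>
     (\<forall>c. \<forall>f\<in>Z. \<forall>a\<in>T f. T (zscale c f) = qmap J (c *\<^sub>R a))"

definition qop_norm :: "zvec set \<Rightarrow> (zvec \<Rightarrow> real) \<Rightarrow> (zvec \<Rightarrow> 'a::real_normed_vector set) \<Rightarrow> real" where
  "qop_norm Z N T = (SUP z\<in>zball Z N. qnorm (T z))"

definition qcompact_op :: "'a::real_normed_vector set \<Rightarrow> zvec set \<Rightarrow> (zvec \<Rightarrow> real) \<Rightarrow> (zvec \<Rightarrow> 'a set) \<Rightarrow> bool" where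
  "qcompact_op J Z N T \<longleftrightarrow> qlin_op J Z T \<and> qrel_compact J (T ` zball Z N)"

definition CQLP :: "'a::banach set \<Rightarrow> bool" where
  "CQLP J \<longleftrightarrow> (\<forall>Z N T. banach_struct Z N \<longrightarrow> qcompact_op J Z N T \<longrightarrow>
     (\<exists>S. compact_op Z N S \<and> (\<forall>z\<in>Z. qmap J (S z) = T z) \<and> op_norm Z N S = qop_norm Z N T))"

end

theory Submission
  imports Defs
begin

lemma mem_qmap: "a \<in> qmap J u \<longleftrightarrow> a - u \<in> J"
  unfolding qmap_def by (auto intro!: exI[of _ "a - u"])

lemma qmap_eq: assumes "subspace J" shows "qmap J u = qmap J v \<longleftrightarrow> u - v \<in> J"
proof
  assume "qmap J u = qmap J v"
  moreover have "u \<in> qmap J u" using assms by (simp add: mem_qmap subspace_0[OF assms])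
  ultimately show "u - v \<in> J" using assms by (simp add: mem_qmap)
next
  assume h: "u - v \<in> J"
  have 1: "a - v \<in> J" if "a - u \<in> J" for a
  proof -
    have "a - v = (a - u) + (u - v)" by simp
    then show ?thesis using that h assms subspace_add by metis
  qed
  have 2: "a - u \<in> J" if "a - v \<in> J" for a
  proof -
    have "a - u = (a - v) - (u - v)" by simp
    then show ?thesis using that h assms subspace_diff by metis
  qed
  show "qmap J u = qmap J v" using 1 2 by (auto simp: mem_qmap)
qed

lemma qmap_in: "qmap J u \<in> quotient_space J" by (simp add: quotient_space_def)

lemma qdist_qmap: fixes J :: "'a::real_normed_vector set" assumes "subspace J"
  shows "qdist (qmap J u) (qmap J v) = infdist (u - v) J"
proof -
  have ne: "J \<noteq> {}" using assms subspace_0 by blast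
  have "(\<lambda>p. norm (fst p - snd p)) ` (qmap J u \<times> qmap J v) = (\<lambda>a. dist (u - v) a) ` J"
  proof (rule set_eqI, rule iffI)
    fix t assume "t \<in> (\<lambda>p. norm (fst p - snd p)) ` (qmap J u \<times> qmap J v)"
    then obtain j k where jk: "j \<in> J" "k \<in> J" "t = norm (u + j - (v + k))" by (auto simp: qmap_def)
    then have "k - j \<in> J" using assms subspace_diff by blast
    moreover have "t = dist (u - v) (k - j)" using jk(3) by (simp add: dist_norm algebra_simps)
    ultimately show "t \<in> (\<lambda>a. dist (u - v) a) ` J" by blast
  next
    fix t assume "t \<in> (\<lambda>a. dist (u - v) a) ` J"
    then obtain a where a: "a \<in> J" "t = dist (u - v) a" by auto
    have "(u + (-a), v + 0) \<in> qmap J u \<times> qmap J v" using a assms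
      unfolding qmap_def by (blast intro: subspace_neg subspace_0)
    moreover have "t = norm (fst (u + (-a), v + 0) - snd (u + (-a), v + (0::'a)))"
      using a(2) by (simp add: dist_norm algebra_simps)
    ultimately show "t \<in> (\<lambda>p. norm (fst p - snd p)) ` (qmap J u \<times> qmap J v)"
      by blast
  qed
  then show ?thesis unfolding qdist_def infdist_notempty[OF ne] by simp
qed

lemma qnorm_qmap: fixes J :: "'a::real_normed_vector set" assumes "subspace J"
  shows "qnorm (qmap J u) = infdist u J"
proof -
  have ne: "J \<noteq> {}" using assms subspace_0 by blast
  have "norm ` qmap J u = (\<lambda>a. dist u a) ` J"
  proof (rule set_eqI, rule iffI)
    fix t assume "t \<in> norm ` qmap J u"
    then obtain j where j: "j \<in> J" "t = norm (u + j)" by (auto simp: qmap_def)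
    then have "-j \<in> J" using assms subspace_neg by blast
    moreover have "t = dist u (-j)" using j(2) by (simp add: dist_norm)
    ultimately show "t \<in> (\<lambda>a. dist u a) ` J" by blast
  next
    fix t assume "t \<in> (\<lambda>a. dist u a) ` J"
    then obtain a where a: "a \<in> J" "t = dist u a" by auto
    then have "-a \<in> J" using assms subspace_neg by blast
    then have "u + (-a) \<in> qmap J u" unfolding qmap_def by blast
    moreover have "t = norm (u + (-a))" using a(2) by (simp add: dist_norm)
    ultimately show "t \<in> norm ` qmap J u" by blast
  qed
  then show ?thesis unfolding qnorm_def infdist_notempty[OF ne] by simp
qed

lemma infdist_transl: fixes J :: "'a::real_normed_vector set" assumes "subspace J" "k \<in> J"
  shows "infdist (x + k) J = infdist x J"
proof -
  have "qmap J (x + k) = qmap J x" using assms by (simp add: qmap_eq)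
  then show ?thesis using qnorm_qmap[OF assms(1)] by metis
qed

lemma infdist_le_norm: fixes J :: "'a::real_normed_vector set" assumes "subspace J" shows "infdist x J \<le> norm x"
  using infdist_le[OF subspace_0[OF assms], of x] by (simp add: dist_norm)

lemma infdist_less_ex: fixes J :: "'a::real_normed_vector set" assumes "subspace J" "infdist x J < r"
  shows "\<exists>a\<in>J. norm (x - a) < r"
proof -
  have ne: "J \<noteq> {}" using assms subspace_0 by blast
  from assms(2) have "Inf ((\<lambda>a. dist x a) ` J) < r" by (simp add: infdist_notempty[OF ne])
  moreover have "(\<lambda>a. dist x a) ` J \<noteq> {}" using ne by simp
  ultimately obtain t where "t \<in> (\<lambda>a. dist x a) ` J" "t < r" by (meson cInf_lessD)
  then show ?thesis by (auto simp: dist_norm)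
qed

lemma infdist_add: fixes J :: "'a::real_normed_vector set" assumes "subspace J"
  shows "infdist (a + b) J \<le> infdist a J + infdist b J"
proof -
  have ne: "J \<noteq> {}" using assms subspace_0 by blast
  have "infdist (a + b) J - infdist a J \<le> dist b k" if "k \<in> J" for k
  proof -
    have "-k \<in> J" using that assms subspace_neg by blast
    then have "infdist (a + b) J = infdist (a + b + (-k)) J" using infdist_transl[OF assms] by metis
    also have "\<dots> \<le> infdist a J + dist (a + b + (-k)) a" by (rule infdist_triangle)
    also have "dist (a + b + (-k)) a = dist b k" unfolding dist_norm by (simp add: algebra_simps)
    finally show ?thesis by simp
  qed
  then have "infdist (a + b) J - infdist a J \<le> (INF k\<in>J. dist b k)"
    using ne by (intro cINF_greatest) auto
  then show ?thesis by (simp add: infdist_notempty[OF ne])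
qed

lemma infdist_scale: fixes J :: "'a::real_normed_vector set" assumes "subspace J"
  shows "infdist (c *\<^sub>R a) J = \<bar>c\<bar> * infdist a J"
proof (cases "c = 0")
  case True then show ?thesis using infdist_zero[OF subspace_0[OF assms]] by simp
next
  case False
  have ne: "J \<noteq> {}" using assms subspace_0 by blast
  have 1: "infdist (c *\<^sub>R a) J \<le> \<bar>c\<bar> * infdist a J" for c a
  proof -
    have "infdist (c *\<^sub>R a) J \<le> \<bar>c\<bar> * dist a k" if "k \<in> J" for k
    proof -
      have "c *\<^sub>R k \<in> J" using that assms subspace_scale by blast
      then have "infdist (c *\<^sub>R a) J \<le> dist (c *\<^sub>R a) (c *\<^sub>R k)" by (rule infdist_le)
      also have "\<dots> = \<bar>c\<bar> * dist a k" by (simp add: dist_norm flip: scaleR_diff_right)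
      finally show ?thesis .
    qed
    show ?thesis
    proof (cases "c = 0")
      case True then show ?thesis using infdist_zero[OF subspace_0[OF assms]] by simp
    next
      case False
      then have "infdist (c *\<^sub>R a) J / \<bar>c\<bar> \<le> dist a k" if "k \<in> J" for k
        using \<open>\<And>k. k \<in> J \<Longrightarrow> _\<close>[OF that] by (simp add: divide_simps mult.commute)
      then have "infdist (c *\<^sub>R a) J / \<bar>c\<bar> \<le> (INF k\<in>J. dist a k)"
        using ne by (intro cINF_greatest) auto
      then show ?thesis using False by (simp add: infdist_notempty[OF ne] divide_simps mult.commute)
    qed
  qed
  have "infdist a J = infdist (inverse c *\<^sub>R (c *\<^sub>R a)) J" using False by simp
  also have "\<dots> \<le> \<bar>inverse c\<bar> * infdist (c *\<^sub>R a) J" by (rule 1)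
  finally have "\<bar>c\<bar> * infdist a J \<le> infdist (c *\<^sub>R a) J" using False
    by (simp add: divide_simps abs_inverse mult.commute)
  with 1[of c a] show ?thesis by simp
qed

lemma infdist_diff_commute: fixes J :: "'a::real_normed_vector set" assumes "subspace J"
  shows "infdist (a - b) J = infdist (b - a) J"
  using infdist_scale[OF assms, of "-1" "a - b"] by simp

definition l1Z :: "zvec set" where "l1Z = {f. summable (\<lambda>n. \<bar>f n\<bar>)}"
definition l1N :: "zvec \<Rightarrow> real" where "l1N f = (\<Sum>n. \<bar>f n\<bar>)"

lemma l1_single_le: fixes f :: zvec shows "summable (\<lambda>n. \<bar>f n\<bar>) \<Longrightarrow> \<bar>f k\<bar> \<le> (\<Sum>n. \<bar>f n\<bar>)"
  using sum_le_suminf[of "\<lambda>n. \<bar>f n\<bar>" "{k}"] by simp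

lemma l1_partial_le: fixes f :: zvec shows "summable (\<lambda>n. \<bar>f n\<bar>) \<Longrightarrow> (\<Sum>n<K. \<bar>f n\<bar>) \<le> (\<Sum>n. \<bar>f n\<bar>)"
  using sum_le_suminf[of "\<lambda>n. \<bar>f n\<bar>" "{..<K}"] by simp

lemma l1_add_summable: fixes f g :: zvec shows "summable (\<lambda>n. \<bar>f n\<bar>) \<Longrightarrow> summable (\<lambda>n. \<bar>g n\<bar>) \<Longrightarrow> summable (\<lambda>n. \<bar>f n + g n\<bar>)"
  by (rule summable_comparison_test[where g="\<lambda>n. \<bar>f n\<bar> + \<bar>g n\<bar>"]) (auto intro: summable_add)

lemma l1_complete:
  assumes s: "\<And>n. s n \<in> l1Z"
    and cau: "\<forall>e>0. \<exists>M. \<forall>m\<ge>M. \<forall>n\<ge>M. l1N (zadd (s m) (zscale (-1) (s n))) < e"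
  shows "\<exists>f\<in>l1Z. (\<lambda>n. l1N (zadd (s n) (zscale (-1) f))) \<longlonglongrightarrow> 0"
proof -
  have sm: "summable (\<lambda>k. \<bar>s m k - s n k\<bar>)" for m n
    using l1_add_summable[of "s m" "\<lambda>k. - s n k"] s by (simp add: l1Z_def)
  have cau': "\<exists>M. \<forall>m\<ge>M. \<forall>n\<ge>M. (\<Sum>k. \<bar>s m k - s n k\<bar>) < e" if "e > 0" for e
    using cau that by (simp add: l1N_def zadd_def zscale_def)
  have "Cauchy (\<lambda>m. s m k)" for k
  proof (rule metric_CauchyI)
    fix e :: real assume "e > 0"
    then obtain M where M: "\<forall>m\<ge>M. \<forall>n\<ge>M. (\<Sum>k. \<bar>s m k - s n k\<bar>) < e" using cau' by blast
    show "\<exists>M. \<forall>m\<ge>M. \<forall>n\<ge>M. dist (s m k) (s n k) < e"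
    proof (intro exI allI impI)
      fix m n assume "m \<ge> M" "n \<ge> M"
      then have "(\<Sum>k. \<bar>s m k - s n k\<bar>) < e" using M by blast
      then show "dist (s m k) (s n k) < e"
        using l1_single_le[OF sm[of m n], of k] by (simp add: dist_real_def)
    qed
  qed
  then have "convergent (\<lambda>m. s m k)" for k by (simp add: Cauchy_convergent_iff)
  then have conv: "convergent (\<lambda>m. s m k)" for k .
  define f where "f k = lim (\<lambda>m. s m k)" for k
  have f: "(\<lambda>m. s m k) \<longlonglongrightarrow> f k" for k
    using conv[of k] unfolding f_def convergent_LIMSEQ_iff .
  have key: "summable (\<lambda>k. \<bar>s m k - f k\<bar>) \<and> (\<Sum>k. \<bar>s m k - f k\<bar>) \<le> e"
    if M: "\<forall>m\<ge>M. \<forall>n\<ge>M. (\<Sum>k. \<bar>s m k - s n k\<bar>) < e" and m: "m \<ge> M" for m M e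
  proof -
    have part: "(\<Sum>k<K. \<bar>s m k - f k\<bar>) \<le> e" for K
    proof -
      have "(\<lambda>n. \<Sum>k<K. \<bar>s m k - s n k\<bar>) \<longlonglongrightarrow> (\<Sum>k<K. \<bar>s m k - f k\<bar>)"
        by (intro tendsto_intros f)
      moreover have "\<forall>n\<ge>M. (\<Sum>k<K. \<bar>s m k - s n k\<bar>) \<le> e"
      proof (intro allI impI)
        fix n assume "n \<ge> M"
        then have "(\<Sum>k. \<bar>s m k - s n k\<bar>) < e" using M m by blast
        then show "(\<Sum>k<K. \<bar>s m k - s n k\<bar>) \<le> e" using l1_partial_le[OF sm[of m n], of K] by simp
      qed
      ultimately show ?thesis by (intro LIMSEQ_le_const2) auto
    qed
    have sum: "summable (\<lambda>k. \<bar>s m k - f k\<bar>)"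
    proof (rule bounded_imp_summable[where B=e])
      fix n show "(\<Sum>k\<le>n. \<bar>s m k - f k\<bar>) \<le> e" using part[of "Suc n"] by (simp add: lessThan_Suc_atMost)
    qed simp
    show ?thesis using sum part by (simp add: suminf_le_const)
  qed
  obtain M1 where M1: "\<forall>m\<ge>M1. \<forall>n\<ge>M1. (\<Sum>k. \<bar>s m k - s n k\<bar>) < 1" using cau'[of 1] by auto
  have fZ: "f \<in> l1Z"
  proof -
    have "summable (\<lambda>k. \<bar>s M1 k\<bar> + \<bar>s M1 k - f k\<bar>)"
      using s[of M1] key[OF M1, of M1] by (intro summable_add) (auto simp: l1Z_def)
    then have "summable (\<lambda>k. \<bar>f k\<bar>)"
      by (rule summable_comparison_test[rotated]) auto
    then show ?thesis by (simp add: l1Z_def)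
  qed
  have "(\<lambda>n. l1N (zadd (s n) (zscale (-1) f))) \<longlonglongrightarrow> 0"
  proof (rule LIMSEQ_I)
    fix r :: real assume "r > 0"
    then obtain M where M: "\<forall>m\<ge>M. \<forall>n\<ge>M. (\<Sum>k. \<bar>s m k - s n k\<bar>) < r/2"
      using cau'[of "r/2"] by auto
    show "\<exists>no. \<forall>n\<ge>no. norm (l1N (zadd (s n) (zscale (- 1) f)) - 0) < r"
    proof (intro exI allI impI)
      fix n assume "n \<ge> M"
      from key[OF M this] have "summable (\<lambda>k. \<bar>s n k - f k\<bar>)" "(\<Sum>k. \<bar>s n k - f k\<bar>) \<le> r/2" by auto
      moreover have "0 \<le> (\<Sum>k. \<bar>s n k - f k\<bar>)" using calculation by (intro suminf_nonneg) auto
      ultimately show "norm (l1N (zadd (s n) (zscale (- 1) f)) - 0) < r"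
        using \<open>r > 0\<close> by (simp add: l1N_def zadd_def zscale_def)
    qed
  qed
  with fZ show ?thesis by blast
qed

lemma l1_banach: "banach_struct l1Z l1N"
proof -
  have z: "zzero \<in> l1Z" by (simp add: l1Z_def zzero_def)
  have a: "\<forall>f\<in>l1Z. \<forall>g\<in>l1Z. zadd f g \<in> l1Z"
    by (simp add: l1Z_def zadd_def l1_add_summable)
  have sc: "\<forall>c. \<forall>f\<in>l1Z. zscale c f \<in> l1Z"
    by (auto simp: l1Z_def zscale_def abs_mult intro: summable_mult)
  have n0: "\<forall>f\<in>l1Z. 0 \<le> l1N f \<and> (l1N f = 0 \<longleftrightarrow> f = zzero)"
  proof
    fix f assume "f \<in> l1Z"
    then have "summable (\<lambda>n. \<bar>f n\<bar>)" by (simp add: l1Z_def)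
    then show "0 \<le> l1N f \<and> (l1N f = 0 \<longleftrightarrow> f = zzero)"
      by (auto simp: l1N_def zzero_def suminf_nonneg suminf_eq_zero_iff)
  qed
  have tri: "\<forall>f\<in>l1Z. \<forall>g\<in>l1Z. l1N (zadd f g) \<le> l1N f + l1N g"
  proof (intro ballI)
    fix f g assume "f \<in> l1Z" "g \<in> l1Z"
    then have sf: "summable (\<lambda>n. \<bar>f n\<bar>)" and sg: "summable (\<lambda>n. \<bar>g n\<bar>)" by (auto simp: l1Z_def)
    have "(\<Sum>n. \<bar>f n + g n\<bar>) \<le> (\<Sum>n. \<bar>f n\<bar> + \<bar>g n\<bar>)"
      by (intro suminf_le l1_add_summable sf sg summable_add) auto
    also have "\<dots> = (\<Sum>n. \<bar>f n\<bar>) + (\<Sum>n. \<bar>g n\<bar>)" by (intro suminf_add[symmetric] sf sg)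
    finally show "l1N (zadd f g) \<le> l1N f + l1N g" by (simp add: l1N_def zadd_def)
  qed
  have hom: "\<forall>c. \<forall>f\<in>l1Z. l1N (zscale c f) = \<bar>c\<bar> * l1N f"
    by (auto simp: l1N_def l1Z_def zscale_def abs_mult suminf_mult)
  show ?thesis unfolding banach_struct_def
  proof (intro conjI z a sc n0 tri hom allI impI)
    fix s :: "nat \<Rightarrow> zvec"
    assume "\<forall>n. s n \<in> l1Z" "\<forall>e>0. \<exists>M. \<forall>m\<ge>M. \<forall>n\<ge>M. l1N (zadd (s m) (zscale (- 1) (s n))) < e"
    then show "\<exists>f\<in>l1Z. (\<lambda>n. l1N (zadd (s n) (zscale (- 1) f))) \<longlonglongrightarrow> 0"
      using l1_complete by blast
  qed
qed

lemma infdist_sum: fixes J :: "'a::real_normed_vector set" assumes "subspace J"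
  shows "infdist (\<Sum>i\<in>I. f i) J \<le> (\<Sum>i\<in>I. infdist (f i) J)"
proof (induction I rule: infinite_finite_induct)
  case (infinite A) then show ?case using infdist_zero[OF subspace_0[OF assms]] by simp
next
  case empty then show ?case using infdist_zero[OF subspace_0[OF assms]] by simp
next
  case (insert x F)
  have "infdist (\<Sum>i\<in>insert x F. f i) J = infdist (f x + (\<Sum>i\<in>F. f i)) J"
    using insert by simp
  also have "\<dots> \<le> infdist (f x) J + infdist (\<Sum>i\<in>F. f i) J" by (rule infdist_add[OF assms])
  also have "\<dots> \<le> infdist (f x) J + (\<Sum>i\<in>F. infdist (f i) J)" using insert by simp
  finally show ?case using insert by simp
qed

lemma infdist_suminf: fixes J :: "'a::banach set" assumes "subspace J"
  and s: "summable (\<lambda>n. norm (f n))"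
  shows "summable (\<lambda>n. infdist (f n) J)" "infdist (suminf f) J \<le> (\<Sum>n. infdist (f n) J)"
proof -
  show s2: "summable (\<lambda>n. infdist (f n) J)"
    by (rule summable_comparison_test[OF _ s]) (auto simp: infdist_nonneg infdist_le_norm[OF assms(1)])
  have "(\<lambda>K. \<Sum>n<K. f n) \<longlonglongrightarrow> suminf f"
    using summable_LIMSEQ[OF summable_norm_cancel[OF s]] .
  then have "(\<lambda>K. infdist (\<Sum>n<K. f n) J) \<longlonglongrightarrow> infdist (suminf f) J"
    by (rule tendsto_infdist)
  moreover have "infdist (\<Sum>n<K. f n) J \<le> (\<Sum>n. infdist (f n) J)" for K
  proof -
    have "infdist (\<Sum>n<K. f n) J \<le> (\<Sum>n<K. infdist (f n) J)" by (rule infdist_sum[OF assms(1)])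
    also have "\<dots> \<le> (\<Sum>n. infdist (f n) J)"
      using sum_le_suminf[OF s2, of "{..<K}"] by (simp add: infdist_nonneg)
    finally show ?thesis .
  qed
  ultimately show "infdist (suminf f) J \<le> (\<Sum>n. infdist (f n) J)"
    by (intro LIMSEQ_le_const2) auto
qed

primrec csets :: "(nat \<Rightarrow> 'a::real_normed_vector) \<Rightarrow> nat \<Rightarrow> 'a set" where
  "csets w 0 = {0}"
| "csets w (Suc L) = (\<lambda>p. fst p + snd p *\<^sub>R w L) ` (csets w L \<times> {-1..1})"

lemma compact_csets: "compact (csets w L)"
proof (induction L)
  case 0 then show ?case by simp
next
  case (Suc L)
  have "continuous_on (csets w L \<times> {-1..1}) (\<lambda>p. fst p + snd p *\<^sub>R w L)"
    by (intro continuous_intros)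
  then show ?case using Suc by (simp add: compact_continuous_image compact_Times)
qed

lemma csets_mem: "(\<forall>m<L. \<bar>b m\<bar> \<le> 1) \<Longrightarrow> (\<Sum>m<L. b m *\<^sub>R w m) \<in> csets w L"
proof (induction L)
  case 0 then show ?case by simp
next
  case (Suc L)
  then have "(\<Sum>m<L. b m *\<^sub>R w m) \<in> csets w L" by simp
  moreover have "b L \<in> {-1..1}" using Suc.prems by (simp add: abs_le_iff)
  ultimately have "((\<Sum>m<L. b m *\<^sub>R w m), b L) \<in> csets w L \<times> {-1..1}" by simp
  then have "(\<lambda>p. fst p + snd p *\<^sub>R w L) ((\<Sum>m<L. b m *\<^sub>R w m), b L) \<in> (\<lambda>p. fst p + snd p *\<^sub>R w L) ` (csets w L \<times> {-1..1})"
    by (rule imageI)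
  then show ?case by simp
qed

definition qd :: "'a::real_normed_vector set \<Rightarrow> 'a set \<Rightarrow> 'a set \<Rightarrow> real" where
  "qd J C D = (if C \<in> quotient_space J \<and> D \<in> quotient_space J then qdist C D else 0)"

lemma quotient_spaceE: "C \<in> quotient_space J \<Longrightarrow> (\<And>u. C = qmap J u \<Longrightarrow> P) \<Longrightarrow> P"
  unfolding quotient_space_def by blast

lemma qd_qmap: fixes J :: "'a::real_normed_vector set" assumes "subspace J"
  shows "qd J (qmap J u) (qmap J v) = infdist (u - v) J"
  by (simp add: qd_def qmap_in qdist_qmap[OF assms])

lemma qspace_ex: "C \<in> quotient_space J \<Longrightarrow> \<exists>u. C = qmap J u"
  unfolding quotient_space_def by blast

lemma qmetric: fixes J :: "'a::real_normed_vector set" assumes "subspace J" "closed J"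
  shows "Metric_space (quotient_space J) (qd J)"
proof
  have ne: "J \<noteq> {}" using assms subspace_0 by blast
  fix x y z :: "'a set"
  show "0 \<le> qd J x y"
  proof (cases "x \<in> quotient_space J \<and> y \<in> quotient_space J")
    case True
    then obtain u v where uv: "x = qmap J u" "y = qmap J v" using qspace_ex by blast
    show ?thesis unfolding uv qd_qmap[OF assms(1)] by (rule infdist_nonneg)
  qed (auto simp add: qd_def)
  show "qd J x y = qd J y x"
  proof (cases "x \<in> quotient_space J \<and> y \<in> quotient_space J")
    case True
    then obtain u v where uv: "x = qmap J u" "y = qmap J v" using qspace_ex by blast
    show ?thesis unfolding uv qd_qmap[OF assms(1)] by (rule infdist_diff_commute[OF assms(1)])
  qed (auto simp add: qd_def)
  show "qd J x y = 0 \<longleftrightarrow> x = y" if h: "x \<in> quotient_space J" "y \<in> quotient_space J"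
  proof -
    obtain u v where uv: "x = qmap J u" "y = qmap J v" using h qspace_ex by blast
    show ?thesis unfolding uv qd_qmap[OF assms(1)] qmap_eq[OF assms(1)]
      using in_closed_iff_infdist_zero[OF assms(2) ne] by simp
  qed
  show "qd J x z \<le> qd J x y + qd J y z"
    if h: "x \<in> quotient_space J" "y \<in> quotient_space J" "z \<in> quotient_space J"
  proof -
    obtain u v w where uv: "x = qmap J u" "y = qmap J v" "z = qmap J w" using h qspace_ex by blast
    have "infdist (u - w) J = infdist ((u - v) + (v - w)) J" by simp
    also have "\<dots> \<le> infdist (u - v) J + infdist (v - w) J" by (rule infdist_add[OF assms(1)])
    finally show ?thesis unfolding uv qd_qmap[OF assms(1)] .
  qed
qed

lemma rec_exists: assumes "\<And>k x. \<exists>y. P k x y"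
  shows "\<exists>u. u 0 = zst \<and> (\<forall>k. P k (u k) (u (Suc k)))"
proof -
  define u where "u = rec_nat zst (\<lambda>k x. SOME y. P k x y)"
  have "u 0 = zst" by (simp add: u_def)
  moreover have "P k (u k) (u (Suc k))" for k
    unfolding u_def using someI_ex[OF assms] by simp
  ultimately show ?thesis by blast
qed

context Metric_space begin

lemma mtotally_bounded_centers:
  assumes "S \<subseteq> M" and H: "\<And>e. e > 0 \<Longrightarrow> \<exists>K. finite K \<and> K \<subseteq> M \<and> S \<subseteq> (\<Union>x\<in>K. mball x e)"
  shows "mtotally_bounded S"
  unfolding mtotally_bounded_def
proof (intro allI impI)
  fix e :: real assume "e > 0"
  then obtain K where K: "finite K" "K \<subseteq> M" "S \<subseteq> (\<Union>x\<in>K. mball x (e/2))" using H[of "e/2"] by auto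
  define K1 where "K1 = {x\<in>K. mball x (e/2) \<inter> S \<noteq> {}}"
  define p where "p x = (SOME s. s \<in> mball x (e/2) \<inter> S)" for x
  have p: "p x \<in> mball x (e/2) \<inter> S" if "x \<in> K1" for x
  proof -
    have "\<exists>s. s \<in> mball x (e/2) \<inter> S" using that by (auto simp: K1_def)
    then show ?thesis unfolding p_def by (rule someI_ex)
  qed
  show "\<exists>K. finite K \<and> K \<subseteq> S \<and> S \<subseteq> (\<Union>x\<in>K. mball x e)"
  proof (intro exI conjI)
    show "finite (p ` K1)" using K(1) by (simp add: K1_def)
    show "p ` K1 \<subseteq> S" using p by blast
    show "S \<subseteq> (\<Union>x\<in>p ` K1. mball x e)"
    proof
      fix s assume "s \<in> S"
      then obtain x where x: "x \<in> K" "s \<in> mball x (e/2)" using K(3) by blast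
      then have "x \<in> K1" using \<open>s \<in> S\<close> by (auto simp: K1_def)
      then have px: "p x \<in> mball x (e/2)" "p x \<in> S" using p by auto
      have "d (p x) s \<le> d (p x) x + d x s"
      proof (rule triangle)
        show "p x \<in> M" using px(2) assms(1) by blast
        show "x \<in> M" using x(1) K(2) by blast
        show "s \<in> M" using \<open>s \<in> S\<close> assms(1) by blast
      qed
      also have "\<dots> < e" using px x by (simp add: commute)
      finally have "s \<in> mball (p x) e" using px(2) \<open>s \<in> S\<close> assms(1) by auto
      then show "s \<in> (\<Union>x\<in>p ` K1. mball x e)" using \<open>x \<in> K1\<close> by blast
    qed
  qed
qed

end

lemma qcomplete: fixes J :: "'a::banach set" assumes "subspace J" "closed J"
  shows "Metric_space.mcomplete (quotient_space J) (qd J)"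
proof -
  interpret Q: Metric_space "quotient_space J" "qd J" by (rule qmetric[OF assms])
  show ?thesis unfolding Q.mcomplete_def
  proof (intro allI impI)
    fix \<sigma> assume cau: "Q.MCauchy \<sigma>"
    then have rng: "range \<sigma> \<subseteq> quotient_space J"
      and C: "\<forall>\<epsilon>>0. \<exists>N. \<forall>n n'. N \<le> n \<longrightarrow> N \<le> n' \<longrightarrow> qd J (\<sigma> n) (\<sigma> n') < \<epsilon>"
      by (auto simp: Q.MCauchy_def)
    have h: "\<forall>k. \<exists>N. \<forall>n n'. N \<le> n \<longrightarrow> N \<le> n' \<longrightarrow> qd J (\<sigma> n) (\<sigma> n') < (1/2::real)^k"
      using C by simp
    obtain N where N: "\<forall>k. \<forall>n n'. N k \<le> n \<longrightarrow> N k \<le> n' \<longrightarrow> qd J (\<sigma> n) (\<sigma> n') < (1/2::real)^k"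
      using choice[OF h] by blast
    define r where "r k = k + (\<Sum>i\<le>k. N i)" for k
    have rmono: "strict_mono r" unfolding strict_mono_Suc_iff r_def by simp
    have rN: "N k \<le> r k" for k
    proof -
      have "N k \<le> (\<Sum>i\<le>k. N i)" by (rule member_le_sum) auto
      then show ?thesis by (simp add: r_def)
    qed
    have rs: "qd J (\<sigma> (r (Suc k))) (\<sigma> (r k)) < (1/2::real)^k" for k
    proof -
      have "r k \<le> r (Suc k)" using rmono by (simp add: strict_mono_less_eq)
      then show ?thesis using N rN[of k] by simp
    qed
    have hv: "\<forall>n. \<exists>u. \<sigma> n = qmap J u" using rng qspace_ex by blast
    obtain v where v: "\<forall>n. \<sigma> n = qmap J (v n)" using choice[OF hv] by blast
    have step: "\<exists>y. (qmap J x = \<sigma> (r k) \<longrightarrow> qmap J y = \<sigma> (r (Suc k)) \<and> norm (y - x) < (1/2::real)^k)" for k x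
    proof (cases "qmap J x = \<sigma> (r k)")
      case True
      have "qd J (\<sigma> (r (Suc k))) (\<sigma> (r k)) = qd J (qmap J (v (r (Suc k)))) (qmap J x)"
        unfolding True by (simp only: v[rule_format, of "r (Suc k)"])
      then have "infdist (v (r (Suc k)) - x) J < (1/2)^k" using rs[of k] qd_qmap[OF assms(1)] by simp
      then obtain a where a: "a \<in> J" "norm (v (r (Suc k)) - x - a) < (1/2)^k"
        using infdist_less_ex[OF assms(1)] by blast
      have "(v (r (Suc k)) - a) - v (r (Suc k)) \<in> J" using a(1) assms(1) subspace_neg by simp
      then have "qmap J (v (r (Suc k)) - a) = qmap J (v (r (Suc k)))" using qmap_eq[OF assms(1)] by blast
      then have "qmap J (v (r (Suc k)) - a) = \<sigma> (r (Suc k))" using v by simp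
      moreover have "norm ((v (r (Suc k)) - a) - x) < (1/2)^k" using a(2) by (simp add: algebra_simps)
      ultimately show ?thesis by blast
    next
      case False then show ?thesis by blast
    qed
    obtain u where u0: "u 0 = v (r 0)"
      and uS: "\<forall>k. (qmap J (u k) = \<sigma> (r k) \<longrightarrow> qmap J (u (Suc k)) = \<sigma> (r (Suc k)) \<and> norm (u (Suc k) - u k) < (1/2::real)^k)"
      using rec_exists[where zst="v (r 0)" and P="\<lambda>k x y. qmap J x = \<sigma> (r k) \<longrightarrow> qmap J y = \<sigma> (r (Suc k)) \<and> norm (y - x) < (1/2::real)^k", OF step]
      by blast
    have inv: "qmap J (u k) = \<sigma> (r k)" for k
    proof (induction k)
      case 0 then show ?case using u0 v by simp
    next
      case (Suc k) then show ?case using uS by blast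
    qed
    have du: "norm (u (Suc k) - u k) \<le> (1/2::real)^k" for k
    proof -
      have "norm (u (Suc k) - u k) < (1/2::real)^k" using uS inv by blast
      then show ?thesis by simp
    qed
    have sd: "summable (\<lambda>k. u (Suc k) - u k)"
    proof (rule summable_comparison_test'[where g="\<lambda>k. (1/2::real)^k"])
      show "summable (\<lambda>k. (1/2::real)^k)" by (rule summable_geometric) simp
      show "norm (u (Suc n) - u n) \<le> (1/2::real)^n" for n by (rule du)
    qed
    define U where "U = u 0 + suminf (\<lambda>k. u (Suc k) - u k)"
    have lim1: "(\<lambda>n. \<Sum>k<n. u (Suc k) - u k) \<longlonglongrightarrow> suminf (\<lambda>k. u (Suc k) - u k)"
      by (rule summable_LIMSEQ[OF sd])
    have lim2: "(\<lambda>n. u 0 + (\<Sum>k<n. u (Suc k) - u k)) \<longlonglongrightarrow> U"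
      unfolding U_def by (rule tendsto_add[OF tendsto_const lim1])
    have eqf: "(\<lambda>n. u 0 + (\<Sum>k<n. u (Suc k) - u k)) = u"
    proof (rule ext)
      fix n show "u 0 + (\<Sum>k<n. u (Suc k) - u k) = u n" by (simp only: sum_lessThan_telescope) simp
    qed
    have uU: "u \<longlonglongrightarrow> U" using lim2 unfolding eqf .
    have "limitin Q.mtopology (\<sigma> \<circ> r) (qmap J U) sequentially"
      unfolding Q.limitin_metric_dist_null
    proof (intro conjI)
      show "qmap J U \<in> quotient_space J" by (rule qmap_in)
      show "\<forall>\<^sub>F x in sequentially. (\<sigma> \<circ> r) x \<in> quotient_space J" using rng by (auto intro!: always_eventually)
      have e: "qd J ((\<sigma> \<circ> r) n) (qmap J U) = infdist (u n - U) J" for n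
      proof -
        have "qd J ((\<sigma> \<circ> r) n) (qmap J U) = qd J (qmap J (u n)) (qmap J U)" using inv[of n] by simp
        then show ?thesis using qd_qmap[OF assms(1)] by simp
      qed
      have lz: "(\<lambda>n. norm (u n - U)) \<longlonglongrightarrow> 0" by (rule tendsto_norm_zero[OF LIM_zero[OF uU]])
      have le:  "norm (qd J ((\<sigma> \<circ> r) n) (qmap J U)) \<le> norm (u n - U)" for n
        unfolding e using infdist_le_norm[OF assms(1), of "u n - U"] infdist_nonneg[of "u n - U" J] by simp
      show "(\<lambda>n. qd J ((\<sigma> \<circ> r) n) (qmap J U)) \<longlonglongrightarrow> 0"
        by (rule Lim_null_comparison[OF always_eventually lz]) (use le in blast)
    qed
    then show "\<exists>x. limitin Q.mtopology \<sigma> x sequentially"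
      using Q.MCauchy_convergent_subsequence[OF cau rmono] by blast
  qed
qed

lemma qrel_compact_of_TB: fixes J :: "'a::banach set" assumes "subspace J" "closed J"
  and tb: "Metric_space.mtotally_bounded (quotient_space J) (qd J) S"
  shows "qrel_compact J S"
proof -
  interpret Q: Metric_space "quotient_space J" "qd J" by (rule qmetric[OF assms(1,2)])
  have SQ: "S \<subseteq> quotient_space J" using Q.mtotally_bounded_imp_subset[OF tb] .
  show ?thesis unfolding qrel_compact_def
  proof (intro conjI SQ allI impI)
    fix \<sigma> :: "nat \<Rightarrow> 'a set" assume "\<forall>n. \<sigma> n \<in> S"
    then have "range \<sigma> \<subseteq> S" by auto
    then obtain r where r: "strict_mono r" "Q.MCauchy (\<sigma> \<circ> r)"
      using tb unfolding Q.mtotally_bounded_sequentially by blast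
    then obtain C where "limitin Q.mtopology (\<sigma> \<circ> r) C sequentially"
      using qcomplete[OF assms(1,2)] unfolding Q.mcomplete_def by blast
    then have C: "C \<in> quotient_space J" "(\<lambda>n. qd J ((\<sigma> \<circ> r) n) C) \<longlonglongrightarrow> 0"
      unfolding Q.limitin_metric_dist_null by auto
    have "qd J ((\<sigma> \<circ> r) n) C = qdist (\<sigma> (r n)) C" for n
      using C(1) \<open>range \<sigma> \<subseteq> S\<close> SQ by (auto simp: qd_def)
    then have "(\<lambda>n. qdist (\<sigma> (r n)) C) \<longlonglongrightarrow> 0" using C(2) by simp
    then show "\<exists>r C. strict_mono r \<and> C \<in> quotient_space J \<and> (\<lambda>n. qdist (\<sigma> (r n)) C) \<longlonglongrightarrow> 0"
      using r(1) C(1) by blast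
  qed
qed

lemma TB_of_qrel_compact: fixes J :: "'a::banach set" assumes "subspace J" "closed J"
  and qc: "qrel_compact J S"
  shows "Metric_space.mtotally_bounded (quotient_space J) (qd J) S"
proof -
  interpret Q: Metric_space "quotient_space J" "qd J" by (rule qmetric[OF assms(1,2)])
  have SQ: "S \<subseteq> quotient_space J" using qc by (simp add: qrel_compact_def)
  show ?thesis unfolding Q.mtotally_bounded_sequentially
  proof (intro conjI SQ allI impI)
    fix \<sigma> :: "nat \<Rightarrow> 'a set" assume rs: "range \<sigma> \<subseteq> S"
    then obtain r C where r: "strict_mono r" "C \<in> quotient_space J" "(\<lambda>n. qdist (\<sigma> (r n)) C) \<longlonglongrightarrow> 0"
      using qc unfolding qrel_compact_def by blast
    have "qd J ((\<sigma> \<circ> r) n) C = qdist (\<sigma> (r n)) C" for n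
      using r(2) rs SQ by (auto simp: qd_def)
    then have "limitin Q.mtopology (\<sigma> \<circ> r) C sequentially"
      unfolding Q.limitin_metric_dist_null using r(2,3) rs SQ by (auto intro!: always_eventually)
    then have "Q.MCauchy (\<sigma> \<circ> r)"
      using rs SQ by (intro Q.convergent_imp_MCauchy) auto
    then show "\<exists>r. strict_mono r \<and> Q.MCauchy (\<sigma> \<circ> r)" using r(1) by blast
  qed
qed

lemma ball_l1: "a \<in> zball l1Z l1N \<longleftrightarrow> summable (\<lambda>n. \<bar>a n\<bar>) \<and> (\<Sum>n. \<bar>a n\<bar>) \<le> 1"
  by (simp add: zball_def l1Z_def l1N_def)

lemma summable_scaled: fixes w :: "nat \<Rightarrow> 'a::real_normed_vector"
  assumes "summable (\<lambda>n. \<bar>a n\<bar>)" "\<And>n. norm (w n) \<le> B"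
  shows "summable (\<lambda>n. norm (a n *\<^sub>R w n))"
proof (rule summable_comparison_test'[where g="\<lambda>n. \<bar>a n\<bar> * B"])
  show "summable (\<lambda>n. \<bar>a n\<bar> * B)" using assms(1) by (rule summable_mult2)
  show "norm (norm (a n *\<^sub>R w n)) \<le> \<bar>a n\<bar> * B" for n
    using assms(2)[of n] by (simp add: mult_left_mono)
qed

theorem proposition3:
  fixes J :: "'a::banach set" and x :: "nat \<Rightarrow> 'a"
  assumes "subspace J" and "closed J"
    and "CQLP J"
    and "qrel_compact J (range (\<lambda>n. qmap J (x n)))"
  shows "\<exists>z :: nat \<Rightarrow> 'a. compact (closure (range z)) \<and> (\<forall>n. qmap J (z n) = qmap J (x n)) \<and>
           (SUP n. norm (z n)) = (SUP n. qnorm (qmap J (x n)))"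
proof -
  note sub = assms(1)
  interpret Q: Metric_space "quotient_space J" "qd J" by (rule qmetric[OF assms(1,2)])
  have tby: "Q.mtotally_bounded (range (\<lambda>n. qmap J (x n)))"
    by (rule TB_of_qrel_compact[OF assms(1,2,4)])
  obtain c B where cB: "range (\<lambda>n. qmap J (x n)) \<subseteq> Q.mcball c B"
    using Q.mtotally_bounded_imp_mbounded[OF tby] unfolding Q.mbounded_def by blast
  have "qmap J (x 0) \<in> Q.mcball c B" using cB by blast
  then have "c \<in> quotient_space J" by simp
  then obtain c0 where c0: "c = qmap J c0" using qspace_ex by blast
  define qx where "qx n = infdist (x n) J" for n
  define Bq where "Bq = B + infdist c0 J"
  have qxB: "qx n \<le> Bq" for n
  proof -
    have "qmap J (x n) \<in> Q.mcball c B" using cB by blast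
    then have "qd J c (qmap J (x n)) \<le> B" by simp
    then have 1: "infdist (c0 - x n) J \<le> B" unfolding c0 qd_qmap[OF sub] .
    have "infdist (x n) J = infdist ((x n - c0) + c0) J" by simp
    also have "\<dots> \<le> infdist (x n - c0) J + infdist c0 J" by (rule infdist_add[OF sub])
    finally show ?thesis using 1 infdist_diff_commute[OF sub, of "x n" c0] by (simp add: qx_def Bq_def)
  qed
  have qx0: "0 \<le> qx n" for n by (simp add: qx_def infdist_nonneg)
  define Mx where "Mx = (SUP n. qnorm (qmap J (x n)))"
  have Mx_eq: "Mx = (SUP n. qx n)" unfolding Mx_def qx_def qnorm_qmap[OF sub] ..
  have bddq: "bdd_above (range qx)" by (rule bdd_aboveI2) (rule qxB)
  have qxM: "qx n \<le> Mx" for n unfolding Mx_eq by (rule cSUP_upper[OF UNIV_I bddq])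
  have Mx0: "0 \<le> Mx" using qxM[of 0] qx0[of 0] by simp
  have hw: "\<forall>n. \<exists>w. w - x n \<in> J \<and> norm w \<le> qx n + 1"
  proof
    fix n
    have "infdist (x n) J < qx n + 1" by (simp add: qx_def)
    then obtain a where a: "a \<in> J" "norm (x n - a) < qx n + 1" using infdist_less_ex[OF sub] by blast
    have "(x n - a) - x n \<in> J" using a(1) sub subspace_neg by simp
    then show "\<exists>w. w - x n \<in> J \<and> norm w \<le> qx n + 1" using a(2) less_imp_le by blast
  qed
  obtain w where w: "\<forall>n. w n - x n \<in> J \<and> norm (w n) \<le> qx n + 1" using choice[OF hw] by blast
  have wq: "qmap J (w n) = qmap J (x n)" for n using w qmap_eq[OF sub] by blast
  have wB: "norm (w n) \<le> Bq + 1" for n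
  proof -
    have "norm (w n) \<le> qx n + 1" using w by blast
    then show ?thesis using qxB[of n] by linarith
  qed
  have wqx: "infdist (w n) J = qx n" for n
  proof -
    have "infdist (w n) J = qnorm (qmap J (w n))" by (rule qnorm_qmap[OF sub, symmetric])
    also have "\<dots> = qnorm (qmap J (x n))" by (simp only: wq)
    also have "\<dots> = qx n" by (simp only: qnorm_qmap[OF sub] qx_def)
    finally show ?thesis .
  qed
  define S0 where "S0 a = (\<Sum>n. a n *\<^sub>R w n)" for a :: zvec
  have sumS: "summable (\<lambda>n. norm (a n *\<^sub>R w n))" if "a \<in> l1Z" for a
    using that by (intro summable_scaled[where B="Bq + 1"] wB) (simp add: l1Z_def)
  have S0_add: "S0 (zadd f g) = S0 f + S0 g" if "f \<in> l1Z" "g \<in> l1Z" for f g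
  proof -
    have sf: "summable (\<lambda>n. f n *\<^sub>R w n)" using summable_norm_cancel[OF sumS[OF that(1)]] .
    have sg: "summable (\<lambda>n. g n *\<^sub>R w n)" using summable_norm_cancel[OF sumS[OF that(2)]] .
    have 1: "S0 f + S0 g = (\<Sum>n. f n *\<^sub>R w n + g n *\<^sub>R w n)" unfolding S0_def by (rule suminf_add[OF sf sg])
    have 2: "(\<lambda>n. zadd f g n *\<^sub>R w n) = (\<lambda>n. f n *\<^sub>R w n + g n *\<^sub>R w n)"
      by (simp add: zadd_def scaleR_add_left)
    show ?thesis unfolding S0_def 2 using 1 unfolding S0_def by simp
  qed
  have S0_scale: "S0 (zscale c f) = c *\<^sub>R S0 f" if "f \<in> l1Z" for c f
  proof -
    have sf: "summable (\<lambda>n. f n *\<^sub>R w n)" using summable_norm_cancel[OF sumS[OF that]] .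
    have 1: "c *\<^sub>R S0 f = (\<Sum>n. c *\<^sub>R (f n *\<^sub>R w n))" unfolding S0_def by (rule suminf_scaleR_right[OF sf])
    have 2: "(\<lambda>n. zscale c f n *\<^sub>R w n) = (\<lambda>n. c *\<^sub>R (f n *\<^sub>R w n))" by (simp add: zscale_def)
    show ?thesis unfolding S0_def 2 using 1 unfolding S0_def by simp
  qed
  have S0_q: "infdist (S0 f) J \<le> Mx" if "f \<in> zball l1Z l1N" for f
  proof -
    have f: "summable (\<lambda>n. \<bar>f n\<bar>)" "(\<Sum>n. \<bar>f n\<bar>) \<le> 1" using that by (auto simp: ball_l1)
    have sf: "summable (\<lambda>n. norm (f n *\<^sub>R w n))" using f(1) wB by (rule summable_scaled)
    have e1: "infdist (f n *\<^sub>R w n) J = \<bar>f n\<bar> * qx n" for n by (simp add: infdist_scale[OF sub] wqx)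
    have "infdist (S0 f) J \<le> (\<Sum>n. infdist (f n *\<^sub>R w n) J)"
      unfolding S0_def by (rule infdist_suminf(2)[OF sub sf])
    also have "\<dots> = (\<Sum>n. \<bar>f n\<bar> * qx n)" by (simp add: e1)
    also have "\<dots> \<le> (\<Sum>n. \<bar>f n\<bar> * Mx)"
    proof (rule suminf_le)
      show "\<bar>f n\<bar> * qx n \<le> \<bar>f n\<bar> * Mx" for n by (simp add: mult_left_mono qxM)
      show "summable (\<lambda>n. \<bar>f n\<bar> * qx n)" using infdist_suminf(1)[OF sub sf] by (simp add: e1)
      show "summable (\<lambda>n. \<bar>f n\<bar> * Mx)" using f(1) by (rule summable_mult2)
    qed
    also have "\<dots> = (\<Sum>n. \<bar>f n\<bar>) * Mx" using f(1) by (rule suminf_mult2[symmetric])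
    also have "\<dots> \<le> Mx" using mult_right_mono[OF f(2) Mx0] by simp
    finally show ?thesis .
  qed
  define T where "T a = qmap J (S0 a)" for a
  have qlin: "qlin_op J l1Z T" unfolding qlin_op_def
  proof (intro conjI ballI allI)
    fix f assume "f \<in> l1Z" then show "T f \<in> quotient_space J" by (simp add: T_def qmap_in)
  next
    fix f g a b assume fg: "f \<in> l1Z" "g \<in> l1Z" and ab: "a \<in> T f" "b \<in> T g"
    then have "a - S0 f \<in> J" "b - S0 g \<in> J" by (auto simp: T_def mem_qmap)
    then have "(a - S0 f) + (b - S0 g) \<in> J" using sub subspace_add by blast
    then have m: "- ((a - S0 f) + (b - S0 g)) \<in> J" using sub subspace_neg by blast
    have eqn: "(S0 f + S0 g) - (a + b) = - ((a - S0 f) + (b - S0 g))" by (simp add: algebra_simps)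
    have "(S0 f + S0 g) - (a + b) \<in> J" unfolding eqn by (rule m)
    then show "T (zadd f g) = qmap J (a + b)"
      unfolding T_def S0_add[OF fg] qmap_eq[OF sub] .
  next
    fix c f a assume f: "f \<in> l1Z" and a: "a \<in> T f"
    then have "a - S0 f \<in> J" by (auto simp: T_def mem_qmap)
    then have m: "(- c) *\<^sub>R (a - S0 f) \<in> J" using sub subspace_scale by blast
    have eqn: "c *\<^sub>R S0 f - c *\<^sub>R a = (- c) *\<^sub>R (a - S0 f)" by (simp add: algebra_simps)
    have "c *\<^sub>R S0 f - c *\<^sub>R a \<in> J" unfolding eqn by (rule m)
    then show "T (zscale c f) = qmap J (c *\<^sub>R a)"
      unfolding T_def S0_scale[OF f] qmap_eq[OF sub] .
  qed
  have TB: "Q.mtotally_bounded (T ` zball l1Z l1N)"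
  proof (rule Q.mtotally_bounded_centers)
    show "T ` zball l1Z l1N \<subseteq> quotient_space J" by (auto simp: T_def qmap_in)
  next
    fix e :: real assume e: "e > 0"
    obtain K0 where K0: "finite K0" "K0 \<subseteq> range (\<lambda>n. qmap J (x n))"
      "range (\<lambda>n. qmap J (x n)) \<subseteq> (\<Union>c\<in>K0. Q.mball c (e/2))"
      using tby[unfolded Q.mtotally_bounded_def, rule_format, of "e/2"] e by auto
    obtain I where I: "finite I" "K0 = (\<lambda>n. qmap J (x n)) ` I"
      using finite_subset_image[OF K0(1,2)] by blast
    obtain L where L: "I \<subseteq> {..<L}" using finite_nat_bounded[OF I(1)] by blast
    have hphi: "\<forall>n. \<exists>m. m < L \<and> infdist (w n - w m) J < e/2"
    proof
      fix n
      have "qmap J (x n) \<in> (\<Union>c\<in>K0. Q.mball c (e/2))" using K0(3) by blast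
      then obtain m where m: "m \<in> I" "qmap J (x n) \<in> Q.mball (qmap J (x m)) (e/2)" using I(2) by blast
      then have "qd J (qmap J (x m)) (qmap J (x n)) < e/2" by simp
      moreover have "qd J (qmap J (w n)) (qmap J (w m)) = qd J (qmap J (x m)) (qmap J (x n))"
        unfolding wq by (rule Q.commute)
      ultimately have "qd J (qmap J (w n)) (qmap J (w m)) < e/2" by simp
      then have "infdist (w n - w m) J < e/2" by (simp add: qd_qmap[OF sub])
      then show "\<exists>m. m < L \<and> infdist (w n - w m) J < e/2" using m(1) L by blast
    qed
    obtain phi where phi: "\<forall>n. phi n < L \<and> infdist (w n - w (phi n)) J < e/2"
      using choice[OF hphi] by blast
    have tbc: "\<forall>\<epsilon>>0. \<exists>k. finite k \<and> k \<subseteq> csets w L \<and> csets w L \<subseteq> (\<Union>x\<in>k. ball x \<epsilon>)"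
      by (rule seq_compact_imp_totally_bounded[OF compact_imp_seq_compact[OF compact_csets]])
    obtain P where P: "finite P" "P \<subseteq> csets w L" "csets w L \<subseteq> (\<Union>p\<in>P. ball p (e/2))"
      using tbc[rule_format, of "e/2"] e by auto
    show "\<exists>K. finite K \<and> K \<subseteq> quotient_space J \<and> T ` zball l1Z l1N \<subseteq> (\<Union>c\<in>K. Q.mball c e)"
    proof (intro exI conjI)
      show "finite (qmap J ` P)" using P(1) by simp
      show "qmap J ` P \<subseteq> quotient_space J" by (auto simp: qmap_in)
      show "T ` zball l1Z l1N \<subseteq> (\<Union>c\<in>qmap J ` P. Q.mball c e)"
      proof
        fix t assume "t \<in> T ` zball l1Z l1N"
        then obtain a where a: "a \<in> zball l1Z l1N" "t = T a" by blast
        have as: "summable (\<lambda>n. \<bar>a n\<bar>)" and a1: "(\<Sum>n. \<bar>a n\<bar>) \<le> 1" using a(1) by (auto simp: ball_l1)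
        define b where "b m = (\<Sum>n. if phi n = m then a n else 0)" for m
        have sb: "summable (\<lambda>n. if phi n = m then a n else 0)" for m
          by (rule summable_comparison_test'[OF as]) auto
        have bm: "\<bar>b m\<bar> \<le> 1" for m
        proof -
          have "\<bar>b m\<bar> \<le> (\<Sum>n. \<bar>if phi n = m then a n else 0\<bar>)"
            unfolding b_def by (rule summable_rabs) (rule summable_comparison_test'[OF as], auto)
          also have "\<dots> \<le> (\<Sum>n. \<bar>a n\<bar>)"
            by (rule suminf_le) (auto intro: summable_comparison_test'[OF as])
          finally show ?thesis using a1 by simp
        qed
        define v' where "v' = (\<Sum>m<L. b m *\<^sub>R w m)"
        have v'c: "v' \<in> csets w L" unfolding v'_def using bm by (intro csets_mem) auto
        then obtain p where p: "p \<in> P" "dist p v' < e/2" using P(3) by auto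
        have wphiB: "norm (w (phi n)) \<le> Bq + 1" for n by (rule wB)
        have s1: "summable (\<lambda>n. norm (a n *\<^sub>R w (phi n)))" using as wphiB by (rule summable_scaled)
        have s2: "summable (\<lambda>n. norm (a n *\<^sub>R w n))" using as wB by (rule summable_scaled)
        have v'eq: "v' = (\<Sum>n. a n *\<^sub>R w (phi n))"
        proof -
          have pt: "a n *\<^sub>R w (phi n) = (\<Sum>m<L. (if phi n = m then a n else 0) *\<^sub>R w m)" for n
          proof -
            have "(\<Sum>m<L. (if phi n = m then a n else 0) *\<^sub>R w m) = (\<Sum>m<L. if phi n = m then a n *\<^sub>R w m else 0)"
              by (rule sum.cong) auto
            also have "\<dots> = a n *\<^sub>R w (phi n)" using phi by (simp add: sum.delta')
            finally show ?thesis by simp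
          qed
          have "(\<Sum>n. a n *\<^sub>R w (phi n)) = (\<Sum>n. \<Sum>m<L. (if phi n = m then a n else 0) *\<^sub>R w m)"
            by (simp only: pt)
          also have "\<dots> = (\<Sum>m<L. \<Sum>n. (if phi n = m then a n else 0) *\<^sub>R w m)"
          proof (rule suminf_sum)
            fix m show "summable (\<lambda>n. (if phi n = m then a n else 0) *\<^sub>R w m)"
              using sb[of m] by (rule summable_scaleR_left)
          qed
          also have "\<dots> = (\<Sum>m<L. b m *\<^sub>R w m)"
          proof (rule sum.cong)
            fix m show "(\<Sum>n. (if phi n = m then a n else 0) *\<^sub>R w m) = b m *\<^sub>R w m"
              unfolding b_def by (rule suminf_scaleR_left[symmetric]) (rule sb)
          qed simp
          finally show ?thesis by (simp add: v'_def)
        qed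
        have dif: "v' - S0 a = (\<Sum>n. a n *\<^sub>R (w (phi n) - w n))"
          unfolding v'eq S0_def
          by (subst suminf_diff[OF summable_norm_cancel[OF s1] summable_norm_cancel[OF s2]]) (simp add: scaleR_diff_right)
        have s3: "summable (\<lambda>n. norm (a n *\<^sub>R (w (phi n) - w n)))"
        proof (rule summable_scaled[OF as])
          fix n show "norm (w (phi n) - w n) \<le> 2 * (Bq + 1)"
            using norm_triangle_ineq4[of "w (phi n)" "w n"] wB[of n] wB[of "phi n"] by simp
        qed
        have "infdist (v' - S0 a) J \<le> (\<Sum>n. infdist (a n *\<^sub>R (w (phi n) - w n)) J)"
          unfolding dif by (rule infdist_suminf(2)[OF sub s3])
        also have "\<dots> \<le> (\<Sum>n. \<bar>a n\<bar> * (e/2))"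
        proof (rule suminf_le)
          show "infdist (a n *\<^sub>R (w (phi n) - w n)) J \<le> \<bar>a n\<bar> * (e/2)" for n
          proof -
            have "infdist (w n - w (phi n)) J < e/2" using phi by blast
            then have "infdist (w (phi n) - w n) J < e/2"
              using infdist_diff_commute[OF sub, of "w n" "w (phi n)"] by linarith
            then have "\<bar>a n\<bar> * infdist (w (phi n) - w n) J \<le> \<bar>a n\<bar> * (e/2)"
              by (intro mult_left_mono) auto
            then show ?thesis by (simp only: infdist_scale[OF sub])
          qed
          show "summable (\<lambda>n. infdist (a n *\<^sub>R (w (phi n) - w n)) J)" by (rule infdist_suminf(1)[OF sub s3])
          show "summable (\<lambda>n. \<bar>a n\<bar> * (e/2))" using as by (rule summable_mult2)
        qed
        also have "\<dots> = (\<Sum>n. \<bar>a n\<bar>) * (e/2)" using as by (rule suminf_mult2[symmetric])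
        also have "\<dots> \<le> e/2" using mult_right_mono[OF a1, of "e/2"] e by simp
        finally have d2: "infdist (v' - S0 a) J \<le> e/2" .
        have "infdist (p - S0 a) J = infdist ((p - v') + (v' - S0 a)) J" by simp
        also have "\<dots> \<le> infdist (p - v') J + infdist (v' - S0 a) J" by (rule infdist_add[OF sub])
        also have "\<dots> < e" using d2 p(2) infdist_le_norm[OF sub, of "p - v'"] by (simp add: dist_norm)
        finally have "qd J (qmap J p) t < e" using a(2) by (simp add: T_def qd_qmap[OF sub])
        then have "t \<in> Q.mball (qmap J p) e" using a(2) by (simp add: T_def qmap_in)
        then show "t \<in> (\<Union>c\<in>qmap J ` P. Q.mball c e)" using p(1) by blast
      qed
    qed
  qed
  have qc: "qcompact_op J l1Z l1N T" unfolding qcompact_op_def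
    using qlin qrel_compact_of_TB[OF assms(1,2) TB] by (rule conjI)
  obtain S' where S': "compact_op l1Z l1N S'" "\<forall>z\<in>l1Z. qmap J (S' z) = T z"
    "op_norm l1Z l1N S' = qop_norm l1Z l1N T"
    using assms(3)[unfolded CQLP_def, rule_format, OF l1_banach qc] by (elim exE conjE) (rule that)
  define ee where "ee n = (\<lambda>k::nat. if k = n then 1 else 0::real)" for n
  have ee_ball: "ee n \<in> zball l1Z l1N" for n
  proof -
    have "(\<lambda>k. \<bar>ee n k\<bar>) = (\<lambda>k. if k = n then 1 else 0)" by (auto simp: ee_def)
    moreover have "(\<lambda>k. if k = n then 1 else 0::real) sums 1" using sums_single[of n "\<lambda>_. 1::real"] by simp
    ultimately show ?thesis by (simp add: ball_l1 sums_iff)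
  qed
  have ee_Z: "ee n \<in> l1Z" for n using ee_ball[of n] by (simp add: zball_def)
  have S0ee: "S0 (ee n) = w n" for n
  proof -
    have "(\<lambda>k. ee n k *\<^sub>R w k) = (\<lambda>k. if k = n then w k else 0)" by (auto simp: ee_def)
    then show ?thesis unfolding S0_def using sums_single[of n w] by (simp add: sums_iff)
  qed
  define z where "z n = S' (ee n)" for n
  have zq: "qmap J (z n) = qmap J (x n)" for n
    using S'(2) ee_Z[of n] S0ee[of n] wq[of n] by (simp add: z_def T_def)
  have cpt: "compact (closure (S' ` zball l1Z l1N))" using S'(1) by (simp add: compact_op_def)
  have rz: "range z \<subseteq> S' ` zball l1Z l1N" using ee_ball by (auto simp: z_def)
  have cz: "compact (closure (range z))"
  proof -
    have "closure (range z) \<subseteq> closure (S' ` zball l1Z l1N)" using rz by (rule closure_mono)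
    then have eq: "closure (range z) = closure (S' ` zball l1Z l1N) \<inter> closure (range z)" by blast
    show ?thesis by (subst eq) (rule compact_Int_closed[OF cpt closed_closure])
  qed
  have "bounded (S' ` zball l1Z l1N)"
    using compact_imp_bounded[OF cpt] closure_subset bounded_subset by blast
  then obtain BB where BB: "\<forall>y\<in>S' ` zball l1Z l1N. norm y \<le> BB" unfolding bounded_iff by blast
  have bddS: "bdd_above ((\<lambda>z. norm (S' z)) ` zball l1Z l1N)" by (rule bdd_aboveI2) (use BB in auto)
  have ballne: "zball l1Z l1N \<noteq> {}" using ee_ball by blast
  have opM: "op_norm l1Z l1N S' \<le> Mx"
  proof -
    have "qop_norm l1Z l1N T \<le> Mx" unfolding qop_norm_def
    proof (rule cSUP_least[OF ballne])
      fix f assume "f \<in> zball l1Z l1N"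
      then show "qnorm (T f) \<le> Mx" using S0_q by (simp add: T_def qnorm_qmap[OF sub])
    qed
    then show ?thesis using S'(3) by simp
  qed
  have zle: "norm (z n) \<le> Mx" for n
  proof -
    have "norm (z n) \<le> op_norm l1Z l1N S'" unfolding op_norm_def z_def
      using bddS ee_ball[of n] by (rule cSUP_upper2) simp
    then show ?thesis using opM by simp
  qed
  have zge: "qx n \<le> norm (z n)" for n
  proof -
    have "qx n = qnorm (qmap J (x n))" by (simp only: qnorm_qmap[OF sub] qx_def)
    also have "\<dots> = qnorm (qmap J (z n))" by (simp only: zq)
    also have "\<dots> = infdist (z n) J" by (rule qnorm_qmap[OF sub])
    finally have "qx n = infdist (z n) J" .
    then show ?thesis using infdist_le_norm[OF sub] by simp
  qed
  have bddz: "bdd_above (range (\<lambda>n. norm (z n)))" by (rule bdd_aboveI2) (rule zle)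
  have "(SUP n. norm (z n)) = Mx"
  proof (rule antisym)
    show "(SUP n. norm (z n)) \<le> Mx" by (rule cSUP_least) (auto simp: zle)
    show "Mx \<le> (SUP n. norm (z n))" unfolding Mx_eq
    proof (rule cSUP_least)
      fix n show "qx n \<le> (SUP n. norm (z n))" by (rule cSUP_upper2[OF bddz UNIV_I zge])
    qed simp
  qed
  then show ?thesis using cz zq unfolding Mx_def by (intro exI[of _ z] conjI allI) auto
qed

end
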